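(* Let $\pi$ be a policy, $\gamma\in[0,1)$, and $q^*$ a probability density on $\mathcal{S}\times\mathcal{A}$. Assume that $d^{\pi,\gamma}(\bar s,\bar a)$, $d^{\pi,\gamma}(\bar s,\bar a\mid s,a)$, $\tilde d^{\pi,\gamma}(\bar s,\bar a)$ and $q^*(\bar s,\bar a)$ are strictly positive densities on their common support and that $$L:=\sup_{(\bar s,\bar a)}\left|\log \frac{d^{\pi,\gamma}(\bar s,\bar a)}{q^*(\bar s,\bar a)}\right|<\infty .$$ Then $$\mathbb{E}_{(s,a)\sim d^{\pi,\gamma}(\cdot,\cdot)}\Big[-\mathrm{KL}_{\bar s,\bar a}\big(d^{\pi,\gamma}(\bar s,\bar a\mid s,a)\,\|\,q^*(\bar s,\bar a)\big)\Big]\le -\mathrm{KL}_{\bar s,\bar a}\big(d^{\pi,\gamma}(\bar s,\bar a)\,\|\,q^*(\bar s,\bar a)\big)+L\sqrt{2\,\mathrm{KL}_{\bar s,\bar a}\big(d^{\pi,\gamma}(\bar s,\bar a)\,\|\,\tilde d^{\pi,\gamma}(\bar s,\bar a)\big)}.$$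
   Context: Consider an infinite-horizon Markov decision process with state space $\mathcal{S}$, action space $\mathcal{A}$, initial state density $p_0$, transition density $p(s'\mid s,a)$, and discount factor $\gamma\in[0,1)$; a policy $\pi(a\mid s)$ is a conditional density over actions. (Densities are with respect to fixed reference measures, e.g. counting measure in the discrete case.) For $\Delta\ge 1$, $p^\pi_\Delta(\bar s\mid s,a)$ denotes the density of the state $s_\Delta$ when $s_0=s$, $a_0=a$, $a_t\sim\pi(\cdot\mid s_t)$ and $s_{t+1}\sim p(\cdot\mid s_t,a_t)$. The conditional state-action visitation distribution is $$d^{\pi,\gamma}(\bar s,\bar a\mid s,a)=(1-\gamma)\,\pi(\bar a\mid\bar s)\sum_{\Delta=1}^\infty\gamma^{\Delta-1}p^\pi_\Delta(\bar s\mid s,a).$$ The marginal (discounted) state-action visitation distribution is $d^{\pi,\gamma}(\bar s,\bar a)=(1-\gamma)\pi(\bar a\mid\bar s)\sum_{t=0}^\infty\gamma^t p^\pi_t(\bar s)$, where $p^\pi_t$ is the density of $s_t$ when $s_0\sim p_0$ and actions follow $\pi$. Finally $\tilde d^{\pi,\gamma}(\bar s,\bar a)=\mathbb{E}_{(s,a)\sim d^{\pi,\gamma}(\cdot,\cdot)}\big[d^{\pi,\gamma}(\bar s,\bar a\mid s,a)\big]$. $\mathrm{KL}$ denotes the Kullback–Leibler divergence. *)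

theory Defs
  imports "HOL-Probability.Probability"
begin

text \<open>General MDP with densities w.r.t. reference measures Ms (states) and Ma (actions).
  p0 s = initial density, P s a s' = p(s' | s,a), pol s a = pi(a | s).\<close>

fun state_dens :: "'s measure \<Rightarrow> 'a measure \<Rightarrow> ('s \<Rightarrow> real) \<Rightarrow> ('s \<Rightarrow> 'a \<Rightarrow> 's \<Rightarrow> real)
    \<Rightarrow> ('s \<Rightarrow> 'a \<Rightarrow> real) \<Rightarrow> nat \<Rightarrow> 's \<Rightarrow> ennreal" where
  "state_dens Ms Ma p0 P pol 0 = (\<lambda>s. ennreal (p0 s))"
| "state_dens Ms Ma p0 P pol (Suc t) =
     (\<lambda>s'. \<integral>\<^sup>+ s. \<integral>\<^sup>+ a. state_dens Ms Ma p0 P pol t s * ennreal (pol s a * P s a s') \<partial>Ma \<partial>Ms)"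

text \<open>cond_state_dens ... k s a sbar = p^pi_Delta(sbar | s,a) with Delta = k + 1.\<close>
fun cond_state_dens :: "'s measure \<Rightarrow> 'a measure \<Rightarrow> ('s \<Rightarrow> 'a \<Rightarrow> 's \<Rightarrow> real)
    \<Rightarrow> ('s \<Rightarrow> 'a \<Rightarrow> real) \<Rightarrow> nat \<Rightarrow> 's \<Rightarrow> 'a \<Rightarrow> 's \<Rightarrow> ennreal" where
  "cond_state_dens Ms Ma P pol 0 = (\<lambda>s a sb. ennreal (P s a sb))"
| "cond_state_dens Ms Ma P pol (Suc k) =
     (\<lambda>s a sb. \<integral>\<^sup>+ s'. \<integral>\<^sup>+ a'. cond_state_dens Ms Ma P pol k s a s' * ennreal (pol s' a' * P s' a' sb) \<partial>Ma \<partial>Ms)"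

definition visit :: "'s measure \<Rightarrow> 'a measure \<Rightarrow> ('s \<Rightarrow> real) \<Rightarrow> ('s \<Rightarrow> 'a \<Rightarrow> 's \<Rightarrow> real)
    \<Rightarrow> ('s \<Rightarrow> 'a \<Rightarrow> real) \<Rightarrow> real \<Rightarrow> 's \<times> 'a \<Rightarrow> ennreal" where
  "visit Ms Ma p0 P pol \<gamma> = (\<lambda>(sb, ab).
     ennreal ((1 - \<gamma>) * pol sb ab) * (\<Sum>t. ennreal (\<gamma> ^ t) * state_dens Ms Ma p0 P pol t sb))"

definition cond_visit :: "'s measure \<Rightarrow> 'a measure \<Rightarrow> ('s \<Rightarrow> 'a \<Rightarrow> 's \<Rightarrow> real)
    \<Rightarrow> ('s \<Rightarrow> 'a \<Rightarrow> real) \<Rightarrow> real \<Rightarrow> 's \<times> 'a \<Rightarrow> 's \<times> 'a \<Rightarrow> ennreal" where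
  "cond_visit Ms Ma P pol \<gamma> = (\<lambda>(s, a) (sb, ab).
     ennreal ((1 - \<gamma>) * pol sb ab) * (\<Sum>k. ennreal (\<gamma> ^ k) * cond_state_dens Ms Ma P pol k s a sb))"

definition tilde_visit :: "'s measure \<Rightarrow> 'a measure \<Rightarrow> ('s \<Rightarrow> real) \<Rightarrow> ('s \<Rightarrow> 'a \<Rightarrow> 's \<Rightarrow> real)
    \<Rightarrow> ('s \<Rightarrow> 'a \<Rightarrow> real) \<Rightarrow> real \<Rightarrow> 's \<times> 'a \<Rightarrow> ennreal" where
  "tilde_visit Ms Ma p0 P pol \<gamma> = (\<lambda>y.
     \<integral>\<^sup>+ z. visit Ms Ma p0 P pol \<gamma> z * cond_visit Ms Ma P pol \<gamma> z y \<partial>(Ms \<Otimes>\<^sub>M Ma))"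

definition KL_dens :: "'b measure \<Rightarrow> ('b \<Rightarrow> real) \<Rightarrow> ('b \<Rightarrow> real) \<Rightarrow> ereal" where
  "KL_dens M f g = (if integrable M (\<lambda>x. f x * ln (f x / g x))
      then ereal (\<integral>x. f x * ln (f x / g x) \<partial>M) else \<infinity>)"

end

theory Submission
  imports Defs
begin


lemma ln_lower_rat:
  fixes t :: real assumes t: "0 < t"
  shows "(t - 1) * (5 * t + 1) / (2 * t * (t + 2)) \<le> ln t"
proof -
  define g where "g = (\<lambda>t::real. ln t - (t - 1) * (5 * t + 1) / (2 * t * (t + 2)))"
  have D: "(g has_real_derivative (t - 1) ^ 3 / (t\<^sup>2 * (t + 2)\<^sup>2)) (at t)" if "0 < t" for t
  proof -
    have "(g has_real_derivative 1 / t - (((5 * t + 1) + 5 * (t - 1)) * (2 * t * (t + 2)) - (t - 1) * (5 * t + 1) * (4 * t + 4)) / (2 * t * (t + 2))\<^sup>2) (at t)"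
      unfolding g_def using that \<open>0 < t\<close> add_pos_pos[of "t * 4" "t * (t * 2)"]
      by (auto intro!: derivative_eq_intros simp: power2_eq_square algebra_simps)
    moreover have "1 / t - (((5 * t + 1) + 5 * (t - 1)) * (2 * t * (t + 2)) - (t - 1) * (5 * t + 1) * (4 * t + 4)) / (2 * t * (t + 2))\<^sup>2
        = (t - 1) ^ 3 / (t\<^sup>2 * (t + 2)\<^sup>2)"
    proof -
  note t = that
  have n: "((5 * t + 1) + 5 * (t - 1)) * (2 * t * (t + 2)) - (t - 1) * (5 * t + 1) * (4 * t + 4) = 4 * (7 * t\<^sup>2 + t + 1)"
    by (simp add: algebra_simps power2_eq_square)
  have d: "(2 * t * (t + 2))\<^sup>2 = 4 * (t\<^sup>2 * (t + 2)\<^sup>2)" by (simp add: power_mult_distrib)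
  have nz: "t \<noteq> 0" "t + 2 \<noteq> 0" using t by auto
  have e: "4 * (7 * t\<^sup>2 + t + 1) / (4 * (t\<^sup>2 * (t + 2)\<^sup>2)) = (7 * t\<^sup>2 + t + 1) / (t\<^sup>2 * (t + 2)\<^sup>2)"
    by (rule mult_divide_mult_cancel_left) simp
  have "1 / t - (7 * t\<^sup>2 + t + 1) / (t\<^sup>2 * (t + 2)\<^sup>2) = (t * (t + 2)\<^sup>2 - (7 * t\<^sup>2 + t + 1)) / (t\<^sup>2 * (t + 2)\<^sup>2)"
    using nz by (simp add: field_simps) (simp add: power2_eq_square algebra_simps power4_eq_xxxx)
  also have "t * (t + 2)\<^sup>2 - (7 * t\<^sup>2 + t + 1) = (t - 1) ^ 3"
    by (simp add: algebra_simps power2_eq_square power3_eq_cube)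
  finally show ?thesis unfolding n d e .
qed

    ultimately show ?thesis by simp
  qed
  have g1: "g 1 = 0" by (simp add: g_def)
  have "g 1 \<le> g t"
  proof (cases "1 \<le> t")
    case True
    show ?thesis
    proof (rule DERIV_nonneg_imp_nondecreasing[OF True])
      fix x assume "1 \<le> x" "x \<le> t"
      then show "\<exists>y. (g has_real_derivative y) (at x) \<and> 0 \<le> y"
        by (intro exI[of _ "(x - 1) ^ 3 / (x\<^sup>2 * (x + 2)\<^sup>2)"]) (auto intro!: D divide_nonneg_pos)
    qed
  next
    case False
    show ?thesis
    proof (rule DERIV_nonpos_imp_nonincreasing[of t 1 g])
      show "t \<le> 1" using False by simp
      fix x assume "t \<le> x" "x \<le> 1"
      then show "\<exists>y. (g has_real_derivative y) (at x) \<and> y \<le> 0"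
      proof (intro exI conjI)
        show "(g has_real_derivative (x - 1) ^ 3 / (x\<^sup>2 * (x + 2)\<^sup>2)) (at x)"
          using t \<open>t \<le> x\<close> by (intro D) simp
        have "(x - 1) ^ 3 \<le> 0" using \<open>x \<le> 1\<close> by (simp add: power_le_zero_eq_numeral)
        then show "(x - 1) ^ 3 / (x\<^sup>2 * (x + 2)\<^sup>2) \<le> 0" by (simp add: divide_nonpos_nonneg)
      qed
    qed
  qed
  then show ?thesis using g1 by (simp add: g_def)
qed

lemma phi_bound:
  fixes t :: real assumes t: "0 < t"
  shows "3 * (t - 1)\<^sup>2 \<le> (2 * t + 4) * (t * ln t - t + 1)"
proof -
  have "(t - 1) * (5 * t + 1) \<le> ln t * (2 * t * (t + 2))"
    using ln_lower_rat[OF t] t by (simp add: pos_divide_le_eq)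
  then show ?thesis by (simp add: power2_eq_square algebra_simps)
qed

lemma xlog_ge: fixes x y :: real assumes "0 < x" "0 < y" shows "x - y \<le> x * ln (x / y)"
proof -
  have "ln (y / x) \<le> y / x - 1" using assms by (intro ln_le_minus_one) simp
  moreover have "ln (y / x) = - ln (x / y)" using assms by (simp add: ln_div)
  ultimately have "1 - y / x \<le> ln (x / y)" by simp
  then have "x * (1 - y / x) \<le> x * ln (x / y)" using assms by (simp add: mult_left_mono)
  then show ?thesis using assms by (simp add: algebra_simps)
qed

lemma pinsker_pointwise:
  fixes a b l :: real assumes a: "0 < a" and b: "0 < b" and l: "0 < l"
  shows "2 * l * \<bar>a - b\<bar> \<le> l\<^sup>2 * (2 * a + 4 * b) / 3 + (a * ln (a / b) - a + b)"
proof -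
  define t where "t = a / b"
  have t: "0 < t" using a b by (simp add: t_def)
  define A where "A = (2 * t + 4) / 3"
  define \<phi> where "\<phi> = t * ln t - t + 1"
  have A: "0 < A" using t by (simp add: A_def)
  have pb: "3 * (t - 1)\<^sup>2 \<le> (2 * t + 4) * \<phi>" using phi_bound[OF t] by (simp add: \<phi>_def)
  have phi0: "0 \<le> \<phi>"
  proof -
    have "0 \<le> 3 * (t - 1)\<^sup>2" by simp
    then have "0 \<le> (2 * t + 4) * \<phi>" using pb by linarith
    moreover have "0 < 2 * t + 4" using t by simp
    ultimately show ?thesis by (simp add: zero_le_mult_iff)
  qed
  have Aphi: "(t - 1)\<^sup>2 \<le> A * \<phi>" using pb by (simp add: A_def)
  have "(2 * l * \<bar>t - 1\<bar>)\<^sup>2 \<le> (l\<^sup>2 * A + \<phi>)\<^sup>2"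
  proof -
    have "(2 * l * \<bar>t - 1\<bar>)\<^sup>2 = 4 * l\<^sup>2 * (t - 1)\<^sup>2" by (simp add: power_mult_distrib)
    also have "\<dots> \<le> 4 * l\<^sup>2 * (A * \<phi>)" using Aphi by (simp add: mult_left_mono)
    also have "\<dots> \<le> (l\<^sup>2 * A + \<phi>)\<^sup>2"
    proof -
      define u where "u = l\<^sup>2 * A"
      have "0 \<le> (u - \<phi>)\<^sup>2" by simp
      moreover have "(u + \<phi>)\<^sup>2 = (u - \<phi>)\<^sup>2 + 4 * u * \<phi>" by (simp add: power2_eq_square algebra_simps)
      moreover have "4 * l\<^sup>2 * (A * \<phi>) = 4 * u * \<phi>" by (simp add: u_def mult.assoc)
      ultimately show ?thesis unfolding u_def[symmetric] by linarith
    qed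
    finally show ?thesis .
  qed
  then have "2 * l * \<bar>t - 1\<bar> \<le> l\<^sup>2 * A + \<phi>"
    by (rule power2_le_imp_le) (use A phi0 in simp)
  then have "b * (2 * l * \<bar>t - 1\<bar>) \<le> b * (l\<^sup>2 * A + \<phi>)" using b by (simp add: mult_left_mono)
  moreover have "b * (2 * l * \<bar>t - 1\<bar>) = 2 * l * \<bar>a - b\<bar>"
  proof -
    have "b * \<bar>t - 1\<bar> = \<bar>b * (t - 1)\<bar>" using b by (simp add: abs_mult)
    also have "b * (t - 1) = a - b" using b by (simp add: t_def algebra_simps)
    finally show ?thesis by (simp add: algebra_simps)
  qed
  moreover have "b * (l\<^sup>2 * A + \<phi>) = l\<^sup>2 * (2 * a + 4 * b) / 3 + (a * ln (a / b) - a + b)"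
  proof -
    have bt: "b * t = a" using b by (simp add: t_def)
    have "b * (l\<^sup>2 * A + \<phi>) = l\<^sup>2 * (2 * (b * t) + 4 * b) / 3 + ((b * t) * ln t - b * t + b)"
      by (simp add: A_def \<phi>_def ring_distribs mult.assoc)
    then show ?thesis unfolding bt by (simp add: t_def)
  qed
  ultimately show ?thesis by simp
qed

lemma pinsker:
  fixes f g :: "'b \<Rightarrow> real"
  assumes [measurable]: "f \<in> borel_measurable M" "g \<in> borel_measurable M"
    and fi: "integrable M f" and gi: "integrable M g"
    and pos: "\<And>x. x \<in> space M \<Longrightarrow> 0 < f x \<and> 0 < g x"
    and f1: "integral\<^sup>L M f = 1" and g1: "integral\<^sup>L M g = 1"
    and ki: "integrable M (\<lambda>x. f x * ln (f x / g x))"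
  shows "(\<integral>x. \<bar>f x - g x\<bar> \<partial>M) \<le> sqrt (2 * (\<integral>x. f x * ln (f x / g x) \<partial>M))"
proof -
  define \<kappa> where "\<kappa> = (\<integral>x. f x * ln (f x / g x) \<partial>M)"
  define T where "T = (\<integral>x. \<bar>f x - g x\<bar> \<partial>M)"
  have T0: "0 \<le> T" unfolding T_def by simp
  have k0: "0 \<le> \<kappa>"
  proof -
    have "(\<integral>x. f x - g x \<partial>M) \<le> \<kappa>" unfolding \<kappa>_def
      using fi gi ki pos by (intro integral_mono) (auto intro!: xlog_ge)
    then show ?thesis using fi gi f1 g1 by simp
  qed
  have main: "2 * l * T \<le> 2 * l\<^sup>2 + \<kappa>" if l: "0 < l" for l
  proof -
    have "(\<integral>x. 2 * l * \<bar>f x - g x\<bar> \<partial>M) \<le> (\<integral>x. l\<^sup>2 * (2 * f x + 4 * g x) / 3 + (f x * ln (f x / g x) - f x + g x) \<partial>M)"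
      using fi gi ki pos l by (intro integral_mono) (auto intro!: pinsker_pointwise)
    also have "\<dots> = l\<^sup>2 * (2 * (\<integral>x. f x \<partial>M) + 4 * (\<integral>x. g x \<partial>M)) / 3 + (\<kappa> - (\<integral>x. f x \<partial>M) + (\<integral>x. g x \<partial>M))"
      using fi gi ki unfolding \<kappa>_def by (simp add: integral_add integral_diff)
    finally show ?thesis using f1 g1 by (simp add: T_def)
  qed
  show ?thesis
  proof (cases "\<kappa> = 0")
    case True
    have "T \<le> 0"
    proof (rule ccontr)
      assume "\<not> T \<le> 0"
      then have "0 < T" by simp
      from main[of "T / 2"] this True have "T * T \<le> T * T / 2" by (simp add: power2_eq_square)
      then show False using \<open>0 < T\<close> by simp
    qed
    then show ?thesis using True by (simp add: T_def \<kappa>_def)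
  next
    case False
    then have kp: "0 < \<kappa>" using k0 by simp
    define l where "l = sqrt (\<kappa> / 2)"
    have l: "0 < l" using kp by (simp add: l_def)
    have l2: "l\<^sup>2 = \<kappa> / 2" using kp by (simp add: l_def)
    have "2 * l * T \<le> 2 * \<kappa>" using main[OF l] l2 by simp
    then have "l * T \<le> \<kappa>" by simp
    then have "T \<le> \<kappa> / l" using l by (simp add: pos_le_divide_eq mult.commute)
    also have "\<kappa> / l = sqrt (2 * \<kappa>)"
    proof -
      have "sqrt (2 * \<kappa>) * l = sqrt (2 * \<kappa> * (\<kappa> / 2))" unfolding l_def by (rule real_sqrt_mult[symmetric])
      also have "2 * \<kappa> * (\<kappa> / 2) = \<kappa>\<^sup>2" by (simp add: power2_eq_square)
      also have "sqrt (\<kappa>\<^sup>2) = \<kappa>" using kp by simp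
      finally show ?thesis using l by (simp add: divide_eq_eq)
    qed
    finally show ?thesis by (simp add: T_def \<kappa>_def)
  qed
qed

lemma ereal_enn2real_le: "ereal (enn2real X) \<le> enn2ereal X"
  by (cases X rule: ennreal_cases) (auto simp: enn2real_ennreal)

lemma integral_le_nn:
  fixes f :: "'b \<Rightarrow> real"
  assumes fi: "integrable M f"
  shows "ereal (integral\<^sup>L M f) \<le> enn2ereal (\<integral>\<^sup>+ x. ennreal (f x) \<partial>M)"
proof -
  have [measurable]: "f \<in> borel_measurable M" using fi by auto
  have mi: "integrable M (\<lambda>x. max (f x) 0)" using fi by auto
  have "integral\<^sup>L M f \<le> (\<integral>x. max (f x) 0 \<partial>M)"
    using fi mi by (intro integral_mono) auto
  also have "\<dots> = enn2real (\<integral>\<^sup>+ x. ennreal (max (f x) 0) \<partial>M)"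
    by (rule integral_eq_nn_integral) auto
  also have "(\<integral>\<^sup>+ x. ennreal (max (f x) 0) \<partial>M) = (\<integral>\<^sup>+ x. ennreal (f x) \<partial>M)"
    by (intro nn_integral_cong) (simp add: max_def ennreal_neg)
  finally have "ereal (integral\<^sup>L M f) \<le> ereal (enn2real (\<integral>\<^sup>+ x. ennreal (f x) \<partial>M))" by simp
  also have "\<dots> \<le> enn2ereal (\<integral>\<^sup>+ x. ennreal (f x) \<partial>M)" by (rule ereal_enn2real_le)
  finally show ?thesis .
qed



locale mdp =
  fixes Ms :: "'s measure" and Ma :: "'a measure"
    and p0 :: "'s \<Rightarrow> real" and P :: "'s \<Rightarrow> 'a \<Rightarrow> 's \<Rightarrow> real" and pol :: "'s \<Rightarrow> 'a \<Rightarrow> real"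
    and \<gamma> :: real
  assumes sfS: "sigma_finite_measure Ms" and sfA: "sigma_finite_measure Ma"
    and p0_meas: "p0 \<in> borel_measurable Ms"
    and p0_nonneg: "\<forall>s. 0 \<le> p0 s"
    and p0_int: "(\<integral>\<^sup>+ s. ennreal (p0 s) \<partial>Ms) = 1"
    and P_meas: "(\<lambda>x. P (fst x) (fst (snd x)) (snd (snd x))) \<in> borel_measurable (Ms \<Otimes>\<^sub>M (Ma \<Otimes>\<^sub>M Ms))"
    and P_nonneg: "\<forall>s a s'. 0 \<le> P s a s'"
    and P_int: "\<forall>s a. (\<integral>\<^sup>+ s'. ennreal (P s a s') \<partial>Ms) = 1"
    and pol_meas: "(\<lambda>x. pol (fst x) (snd x)) \<in> borel_measurable (Ms \<Otimes>\<^sub>M Ma)"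
    and pol_nonneg: "\<forall>s a. 0 \<le> pol s a"
    and pol_int: "\<forall>s. (\<integral>\<^sup>+ a. ennreal (pol s a) \<partial>Ma) = 1"
    and gamma: "0 \<le> \<gamma>" "\<gamma> < 1"
begin

lemma sfM: "sigma_finite_measure (Ms \<Otimes>\<^sub>M Ma)"
  by (rule sigma_finite_pair_measure[OF sfS sfA])

lemmas [measurable (raw)] = sigma_finite_measure.borel_measurable_nn_integral[OF sfS]
  sigma_finite_measure.borel_measurable_nn_integral[OF sfA]
  sigma_finite_measure.borel_measurable_nn_integral[OF sfM]

lemma pol_m[measurable (raw)]:
  "f \<in> measurable N Ms \<Longrightarrow> g \<in> measurable N Ma \<Longrightarrow> (\<lambda>x. pol (f x) (g x)) \<in> borel_measurable N"
  using measurable_compose[OF measurable_Pair[of f N Ms g Ma] pol_meas] by simp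

lemma P_m[measurable (raw)]:
  "f \<in> measurable N Ms \<Longrightarrow> g \<in> measurable N Ma \<Longrightarrow> h \<in> measurable N Ms \<Longrightarrow>
   (\<lambda>x. P (f x) (g x) (h x)) \<in> borel_measurable N"
  using measurable_compose[OF measurable_Pair[OF _ measurable_Pair[of g N Ma h Ms]] P_meas, of f] by simp

lemma p0_m[measurable (raw)]:
  "f \<in> measurable N Ms \<Longrightarrow> (\<lambda>x. p0 (f x)) \<in> borel_measurable N"
  by (rule measurable_compose[OF _ p0_meas])

abbreviation "sd \<equiv> state_dens Ms Ma p0 P pol"
abbreviation "csd \<equiv> cond_state_dens Ms Ma P pol"

lemma sd_m0: "sd t \<in> borel_measurable Ms"
proof (induction t)
  case 0
  then show ?case using p0_meas by simp
next
  case (Suc t)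
  have [measurable]: "(\<lambda>x. sd t (snd (fst x))) \<in> borel_measurable ((Ms \<Otimes>\<^sub>M Ms) \<Otimes>\<^sub>M Ma)"
    by (rule measurable_compose[OF _ Suc.IH]) measurable
  show ?case by simp measurable
qed

lemma sd_m[measurable (raw)]:
  "g \<in> measurable N Ms \<Longrightarrow> (\<lambda>x. sd t (g x)) \<in> borel_measurable N"
  by (rule measurable_compose[OF _ sd_m0])

lemma csd_m0: "(\<lambda>x. csd k (fst x) (fst (snd x)) (snd (snd x))) \<in> borel_measurable (Ms \<Otimes>\<^sub>M (Ma \<Otimes>\<^sub>M Ms))"
proof (induction k)
  case 0
  then show ?case using P_meas by simp
next
  case (Suc k)
  have [measurable]: "(\<lambda>x. csd k (fst (fst (fst x))) (fst (snd (fst (fst x)))) (snd (fst x))) \<in> borel_measurable (((Ms \<Otimes>\<^sub>M (Ma \<Otimes>\<^sub>M Ms)) \<Otimes>\<^sub>M Ms) \<Otimes>\<^sub>M Ma)"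
    using measurable_compose[OF _ Suc.IH, of "\<lambda>x. (fst (fst (fst x)), fst (snd (fst (fst x))), snd (fst x))" "((Ms \<Otimes>\<^sub>M (Ma \<Otimes>\<^sub>M Ms)) \<Otimes>\<^sub>M Ms) \<Otimes>\<^sub>M Ma"]
    by simp
  show ?case by simp measurable
qed

lemma csd_m[measurable (raw)]:
  "f \<in> measurable N Ms \<Longrightarrow> g \<in> measurable N Ma \<Longrightarrow> h \<in> measurable N Ms \<Longrightarrow>
   (\<lambda>x. csd k (f x) (g x) (h x)) \<in> borel_measurable N"
  using measurable_compose[OF measurable_Pair[OF _ measurable_Pair[of g N Ma h Ms]] csd_m0, of f] by simp

lemma pSS: "pair_sigma_finite Ms Ms" and pAS: "pair_sigma_finite Ma Ms" and pSA: "pair_sigma_finite Ms Ma"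
  and pMM: "pair_sigma_finite (Ms \<Otimes>\<^sub>M Ma) (Ms \<Otimes>\<^sub>M Ma)"
  using sfS sfA sfM by (simp_all add: pair_sigma_finite_def)

lemma sd_int: "(\<integral>\<^sup>+ s. sd t s \<partial>Ms) = 1"
proof (induction t)
  case 0
  then show ?case using p0_int by simp
next
  case (Suc t)
  have "(\<integral>\<^sup>+ s. sd (Suc t) s \<partial>Ms) =
     (\<integral>\<^sup>+ s'. \<integral>\<^sup>+ s. \<integral>\<^sup>+ a. sd t s * ennreal (pol s a * P s a s') \<partial>Ma \<partial>Ms \<partial>Ms)" by simp
  also have "\<dots> = (\<integral>\<^sup>+ s. \<integral>\<^sup>+ s'. \<integral>\<^sup>+ a. sd t s * ennreal (pol s a * P s a s') \<partial>Ma \<partial>Ms \<partial>Ms)"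
    by (rule pair_sigma_finite.Fubini'[OF pSS]) measurable
  also have "\<dots> = (\<integral>\<^sup>+ s. \<integral>\<^sup>+ a. \<integral>\<^sup>+ s'. sd t s * ennreal (pol s a * P s a s') \<partial>Ms \<partial>Ma \<partial>Ms)"
    by (intro nn_integral_cong pair_sigma_finite.Fubini'[OF pAS]) measurable
  also have "\<dots> = (\<integral>\<^sup>+ s. \<integral>\<^sup>+ a. (sd t s * ennreal (pol s a)) * (\<integral>\<^sup>+ s'. ennreal (P s a s') \<partial>Ms) \<partial>Ma \<partial>Ms)"
    by (intro nn_integral_cong, subst nn_integral_cmult[symmetric])
       (auto simp: ennreal_mult pol_nonneg P_nonneg mult.assoc)
  also have "\<dots> = (\<integral>\<^sup>+ s. sd t s * (\<integral>\<^sup>+ a. ennreal (pol s a) \<partial>Ma) \<partial>Ms)"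
    by (intro nn_integral_cong, subst nn_integral_cmult[symmetric]) (auto simp: P_int)
  also have "\<dots> = 1" using Suc pol_int by simp
  finally show ?case .
qed

lemma csd_int: "s \<in> space Ms \<Longrightarrow> a \<in> space Ma \<Longrightarrow> (\<integral>\<^sup>+ sb. csd k s a sb \<partial>Ms) = 1"
proof (induction k arbitrary: s a)
  case 0
  then show ?case using P_int by simp
next
  case (Suc k)
  note Suc.prems[measurable]
  have "(\<integral>\<^sup>+ sb. csd (Suc k) s a sb \<partial>Ms) =
     (\<integral>\<^sup>+ sb. \<integral>\<^sup>+ s'. \<integral>\<^sup>+ a'. csd k s a s' * ennreal (pol s' a' * P s' a' sb) \<partial>Ma \<partial>Ms \<partial>Ms)" by simp
  also have "\<dots> = (\<integral>\<^sup>+ s'. \<integral>\<^sup>+ sb. \<integral>\<^sup>+ a'. csd k s a s' * ennreal (pol s' a' * P s' a' sb) \<partial>Ma \<partial>Ms \<partial>Ms)"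
    by (rule pair_sigma_finite.Fubini'[OF pSS]) measurable
  also have "\<dots> = (\<integral>\<^sup>+ s'. \<integral>\<^sup>+ a'. \<integral>\<^sup>+ sb. csd k s a s' * ennreal (pol s' a' * P s' a' sb) \<partial>Ms \<partial>Ma \<partial>Ms)"
    by (intro nn_integral_cong pair_sigma_finite.Fubini'[OF pAS]) measurable
  also have "\<dots> = (\<integral>\<^sup>+ s'. \<integral>\<^sup>+ a'. (csd k s a s' * ennreal (pol s' a')) * (\<integral>\<^sup>+ sb. ennreal (P s' a' sb) \<partial>Ms) \<partial>Ma \<partial>Ms)"
    by (intro nn_integral_cong, subst nn_integral_cmult[symmetric])
       (auto simp: ennreal_mult pol_nonneg P_nonneg mult.assoc)
  also have "\<dots> = (\<integral>\<^sup>+ s'. csd k s a s' * (\<integral>\<^sup>+ a'. ennreal (pol s' a') \<partial>Ma) \<partial>Ms)"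
    by (intro nn_integral_cong, subst nn_integral_cmult[symmetric]) (auto simp: P_int)
  also have "\<dots> = 1" using Suc pol_int by simp
  finally show ?case .
qed

lemma geom: "(\<Sum>t. ennreal (\<gamma> ^ t)) = ennreal (1 / (1 - \<gamma>))"
  using gamma by (subst suminf_ennreal2) (auto intro!: summable_geometric simp: suminf_geometric)

lemma series_int:
  assumes [measurable]: "\<And>t. g t \<in> borel_measurable Ms" and g1: "\<And>t. (\<integral>\<^sup>+ s. g t s \<partial>Ms) = 1"
  shows "(\<integral>\<^sup>+ s. ennreal (1 - \<gamma>) * (\<Sum>t. ennreal (\<gamma> ^ t) * g t s) \<partial>Ms) = 1"
proof -
  have "(\<integral>\<^sup>+ s. ennreal (1 - \<gamma>) * (\<Sum>t. ennreal (\<gamma> ^ t) * g t s) \<partial>Ms)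
      = ennreal (1 - \<gamma>) * (\<integral>\<^sup>+ s. (\<Sum>t. ennreal (\<gamma> ^ t) * g t s) \<partial>Ms)"
    by (rule nn_integral_cmult) measurable
  also have "(\<integral>\<^sup>+ s. (\<Sum>t. ennreal (\<gamma> ^ t) * g t s) \<partial>Ms) = (\<Sum>t. \<integral>\<^sup>+ s. ennreal (\<gamma> ^ t) * g t s \<partial>Ms)"
    by (rule nn_integral_suminf) measurable
  also have "\<dots> = (\<Sum>t. ennreal (\<gamma> ^ t))"
    by (subst nn_integral_cmult) (auto simp: g1)
  finally show ?thesis using gamma by (simp add: geom ennreal_mult[symmetric])
qed

abbreviation "vis \<equiv> visit Ms Ma p0 P pol \<gamma>"
abbreviation "cvis \<equiv> cond_visit Ms Ma P pol \<gamma>"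
abbreviation "tvis \<equiv> tilde_visit Ms Ma p0 P pol \<gamma>"
abbreviation "M \<equiv> Ms \<Otimes>\<^sub>M Ma"

lemma vis_eq: "vis x = ennreal ((1 - \<gamma>) * pol (fst x) (snd x)) * (\<Sum>t. ennreal (\<gamma> ^ t) * sd t (fst x))"
  by (cases x) (simp add: visit_def)

lemma cvis_eq: "cvis z x = ennreal ((1 - \<gamma>) * pol (fst x) (snd x)) * (\<Sum>k. ennreal (\<gamma> ^ k) * csd k (fst z) (snd z) (fst x))"
  by (cases z, cases x) (simp add: cond_visit_def)

lemma vis_m[measurable]: "vis \<in> borel_measurable M"
  unfolding vis_eq[abs_def] by measurable

lemma cvis_m[measurable]: "(\<lambda>(z, x). cvis z x) \<in> borel_measurable (M \<Otimes>\<^sub>M M)"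
  unfolding cvis_eq by measurable

lemma tvis_m[measurable]: "tvis \<in> borel_measurable M"
  unfolding tilde_visit_def by measurable

lemma vis_int: "(\<integral>\<^sup>+ x. vis x \<partial>M) = 1"
proof -
  have "(\<integral>\<^sup>+ x. vis x \<partial>M) = (\<integral>\<^sup>+ sb. \<integral>\<^sup>+ ab. vis (sb, ab) \<partial>Ma \<partial>Ms)"
    by (rule sigma_finite_measure.nn_integral_fst[OF sfA, symmetric]) measurable
  also have "\<dots> = (\<integral>\<^sup>+ sb. ennreal (1 - \<gamma>) * (\<Sum>t. ennreal (\<gamma> ^ t) * sd t sb) \<partial>Ms)"
  proof (intro nn_integral_cong)
    fix sb assume [measurable]: "sb \<in> space Ms"
    have "(\<integral>\<^sup>+ ab. vis (sb, ab) \<partial>Ma) = (\<integral>\<^sup>+ ab. ennreal (1 - \<gamma>) * ennreal (pol sb ab) * (\<Sum>t. ennreal (\<gamma> ^ t) * sd t sb) \<partial>Ma)"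
      using gamma pol_nonneg by (simp add: visit_def ennreal_mult)
    also have "\<dots> = ennreal (1 - \<gamma>) * (\<integral>\<^sup>+ ab. ennreal (pol sb ab) \<partial>Ma) * (\<Sum>t. ennreal (\<gamma> ^ t) * sd t sb)"
      by (subst nn_integral_multc, measurable, subst nn_integral_cmult, measurable)
    finally show "(\<integral>\<^sup>+ ab. vis (sb, ab) \<partial>Ma) = ennreal (1 - \<gamma>) * (\<Sum>t. ennreal (\<gamma> ^ t) * sd t sb)"
      using pol_int by simp
  qed
  also have "\<dots> = 1" by (rule series_int) (auto simp: sd_int)
  finally show ?thesis .
qed

lemma cvis_int: assumes "z \<in> space M" shows "(\<integral>\<^sup>+ x. cvis z x \<partial>M) = 1"
proof -
  obtain s a where z: "z = (s, a)" and sa[measurable]: "s \<in> space Ms" "a \<in> space Ma"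
    using assms by (cases z) (auto simp: space_pair_measure)
  have "(\<integral>\<^sup>+ x. cvis z x \<partial>M) = (\<integral>\<^sup>+ sb. \<integral>\<^sup>+ ab. cvis z (sb, ab) \<partial>Ma \<partial>Ms)"
    by (rule sigma_finite_measure.nn_integral_fst[OF sfA, symmetric]) (unfold cvis_eq z, simp, measurable)
  also have "\<dots> = (\<integral>\<^sup>+ sb. ennreal (1 - \<gamma>) * (\<Sum>t. ennreal (\<gamma> ^ t) * csd t s a sb) \<partial>Ms)"
  proof (intro nn_integral_cong)
    fix sb assume [measurable]: "sb \<in> space Ms"
    have "(\<integral>\<^sup>+ ab. cvis z (sb, ab) \<partial>Ma) = (\<integral>\<^sup>+ ab. ennreal (1 - \<gamma>) * ennreal (pol sb ab) * (\<Sum>t. ennreal (\<gamma> ^ t) * csd t s a sb) \<partial>Ma)"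
      using gamma pol_nonneg by (simp add: z cond_visit_def ennreal_mult)
    also have "\<dots> = ennreal (1 - \<gamma>) * (\<integral>\<^sup>+ ab. ennreal (pol sb ab) \<partial>Ma) * (\<Sum>t. ennreal (\<gamma> ^ t) * csd t s a sb)"
      by (subst nn_integral_multc, measurable, subst nn_integral_cmult, measurable)
    finally show "(\<integral>\<^sup>+ ab. cvis z (sb, ab) \<partial>Ma) = ennreal (1 - \<gamma>) * (\<Sum>t. ennreal (\<gamma> ^ t) * csd t s a sb)"
      using pol_int by simp
  qed
  also have "\<dots> = 1" by (rule series_int) (use csd_int[OF sa] in auto)
  finally show ?thesis .
qed

end
locale mdp2 = mdp +
  fixes qs
  assumes qs_meas[measurable]: "qs \<in> borel_measurable (Ms \<Otimes>\<^sub>M Ma)"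
    and qs_pos: "\<forall>x. 0 < qs x"
    and qs_int: "(\<integral>\<^sup>+ x. ennreal (qs x) \<partial>(Ms \<Otimes>\<^sub>M Ma)) = 1"
    and d_pos: "\<forall>x. 0 < visit Ms Ma p0 P pol \<gamma> x \<and> visit Ms Ma p0 P pol \<gamma> x < \<infinity>"
    and dc_pos: "\<forall>z x. 0 < cond_visit Ms Ma P pol \<gamma> z x \<and> cond_visit Ms Ma P pol \<gamma> z x < \<infinity>"
    and dt_pos: "\<forall>x. 0 < tilde_visit Ms Ma p0 P pol \<gamma> x \<and> tilde_visit Ms Ma p0 P pol \<gamma> x < \<infinity>"
    and L_fin: "bdd_above (range (\<lambda>x. \<bar>ln (enn2real (visit Ms Ma p0 P pol \<gamma> x) / qs x)\<bar>))"
begin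

abbreviation "dd x \<equiv> enn2real (vis x)"
abbreviation "dcc z x \<equiv> enn2real (cvis z x)"
abbreviation "dtt x \<equiv> enn2real (tvis x)"
abbreviation "hh x \<equiv> ln (dd x / qs x)"
abbreviation "LL \<equiv> (SUP x. \<bar>hh x\<bar>)"

lemma dd_pos: "0 < dd x" and dd_e: "ennreal (dd x) = vis x"
  using d_pos[rule_format, of x] by (auto simp: enn2real_positive_iff top.not_eq_extremum)
lemma dcc_pos: "0 < dcc z x" and dcc_e: "ennreal (dcc z x) = cvis z x"
  using dc_pos[rule_format, of z x] by (auto simp: enn2real_positive_iff top.not_eq_extremum)
lemma dtt_pos: "0 < dtt x" and dtt_e: "ennreal (dtt x) = tvis x"
  using dt_pos[rule_format, of x] by (auto simp: enn2real_positive_iff top.not_eq_extremum)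

lemma dd_m[measurable]: "dd \<in> borel_measurable M" by measurable
lemma dcc_m[measurable]: "(\<lambda>(z, x). dcc z x) \<in> borel_measurable (M \<Otimes>\<^sub>M M)"
  using borel_measurable_enn2real[OF cvis_m] by (simp add: case_prod_beta')
lemma dtt_m[measurable]: "dtt \<in> borel_measurable M" by measurable

lemma cvis_m1[measurable]: "z \<in> space M \<Longrightarrow> cvis z \<in> borel_measurable M"
  using measurable_compose_Pair1[OF _ cvis_m] by simp
lemma cvis_m2[measurable]: "x \<in> space M \<Longrightarrow> (\<lambda>z. cvis z x) \<in> borel_measurable M"
  using measurable_compose[OF _ cvis_m, of "\<lambda>z. (z, x)" M] by simp
lemma dcc_m1[measurable]: "z \<in> space M \<Longrightarrow> dcc z \<in> borel_measurable M"
  by (rule borel_measurable_enn2real[OF cvis_m1])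
lemma dcc_m2[measurable]: "x \<in> space M \<Longrightarrow> (\<lambda>z. dcc z x) \<in> borel_measurable M"
  by (rule borel_measurable_enn2real[OF cvis_m2])

lemma dd_int: "integrable M dd" "integral\<^sup>L M dd = 1"
proof -
  have "(\<integral>\<^sup>+ x. ennreal (dd x) \<partial>M) = ennreal 1" using vis_int by (simp add: dd_e)
  then show "integrable M dd" "integral\<^sup>L M dd = 1"
    by (subst (asm) nn_integral_eq_integrable; auto intro: less_imp_le dd_pos)+
qed

lemma dcc_int: assumes z: "z \<in> space M" shows "integrable M (dcc z)" "integral\<^sup>L M (dcc z) = 1"
proof -
  note z[measurable]
  have "(\<integral>\<^sup>+ x. ennreal (dcc z x) \<partial>M) = ennreal 1" using cvis_int[OF z] by (simp add: dcc_e)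
  then show "integrable M (dcc z)" "integral\<^sup>L M (dcc z) = 1"
    by (subst (asm) nn_integral_eq_integrable; auto intro: less_imp_le dcc_pos)+
qed

lemma tvis_int: "(\<integral>\<^sup>+ x. tvis x \<partial>M) = 1"
proof -
  have "(\<integral>\<^sup>+ x. tvis x \<partial>M) = (\<integral>\<^sup>+ x. \<integral>\<^sup>+ z. vis z * cvis z x \<partial>M \<partial>M)"
    by (simp add: tilde_visit_def)
  also have "\<dots> = (\<integral>\<^sup>+ z. \<integral>\<^sup>+ x. vis z * cvis z x \<partial>M \<partial>M)"
    by (rule pair_sigma_finite.Fubini'[OF pMM]) measurable
  also have "\<dots> = (\<integral>\<^sup>+ z. vis z * (\<integral>\<^sup>+ x. cvis z x \<partial>M) \<partial>M)"
    by (intro nn_integral_cong nn_integral_cmult) auto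
  also have "\<dots> = (\<integral>\<^sup>+ z. vis z \<partial>M)"
    by (intro nn_integral_cong) (simp add: cvis_int)
  finally show ?thesis using vis_int by simp
qed

lemma dtt_int: "integrable M dtt" "integral\<^sup>L M dtt = 1"
proof -
  have "(\<integral>\<^sup>+ x. ennreal (dtt x) \<partial>M) = ennreal 1" using tvis_int by (simp add: dtt_e)
  then show "integrable M dtt" "integral\<^sup>L M dtt = 1"
    by (subst (asm) nn_integral_eq_integrable; auto intro: less_imp_le dtt_pos)+
qed

lemma hh_bound: "\<bar>hh x\<bar> \<le> LL" and LL_nonneg: "0 \<le> LL"
proof -
  show "\<bar>hh x\<bar> \<le> LL" by (rule cSUP_upper[OF _ L_fin]) simp
  then show "0 \<le> LL" by (rule order_trans[OF abs_ge_zero])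
qed

lemma hh_m[measurable]: "hh \<in> borel_measurable M" by measurable

lemma bound_int: assumes fi: "integrable M f" and [measurable]: "f \<in> borel_measurable M"
  and f0: "\<And>x. 0 \<le> f x" shows "integrable M (\<lambda>x. f x * hh x)"
proof (rule Bochner_Integration.integrable_bound[of M "\<lambda>x. LL * f x"])
  show "integrable M (\<lambda>x. LL * f x)" using fi by simp
  show "(\<lambda>x. f x * hh x) \<in> borel_measurable M" by measurable
  show "AE x in M. norm (f x * hh x) \<le> norm (LL * f x)"
    using hh_bound LL_nonneg f0 by (auto simp: abs_mult mult.commute intro!: mult_left_mono)
qed

lemma G_nn: "(\<integral>\<^sup>+ p. ennreal (dd (fst p) * dcc (fst p) (snd p)) \<partial>(M \<Otimes>\<^sub>M M)) = 1"
proof -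
  have "(\<integral>\<^sup>+ p. ennreal (dd (fst p) * dcc (fst p) (snd p)) \<partial>(M \<Otimes>\<^sub>M M))
      = (\<integral>\<^sup>+ z. \<integral>\<^sup>+ x. ennreal (dd (fst (z, x)) * dcc (fst (z, x)) (snd (z, x))) \<partial>M \<partial>M)"
    by (rule sigma_finite_measure.nn_integral_fst[OF sfM, symmetric]) measurable
  also have "\<dots> = (\<integral>\<^sup>+ z. vis z * (\<integral>\<^sup>+ x. cvis z x \<partial>M) \<partial>M)"
    by (intro nn_integral_cong, subst nn_integral_cmult[symmetric])
       (auto simp: ennreal_mult dd_e dcc_e less_imp_le[OF dd_pos] less_imp_le[OF dcc_pos])
  also have "\<dots> = (\<integral>\<^sup>+ z. vis z \<partial>M)"
    by (intro nn_integral_cong) (simp add: cvis_int)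
  finally show ?thesis using vis_int by simp
qed

lemma G_int: "integrable (M \<Otimes>\<^sub>M M) (\<lambda>p. dd (fst p) * dcc (fst p) (snd p))"
proof -
  have "(\<integral>\<^sup>+ p. ennreal (dd (fst p) * dcc (fst p) (snd p)) \<partial>(M \<Otimes>\<^sub>M M)) = ennreal 1" using G_nn by simp
  then show ?thesis
    by (subst (asm) nn_integral_eq_integrable) (auto intro!: less_imp_le dd_pos dcc_pos)
qed

lemma F_int: "integrable (M \<Otimes>\<^sub>M M) (\<lambda>(z, x). dd z * dcc z x * hh x)"
proof (rule Bochner_Integration.integrable_bound[of _ "\<lambda>p. LL * (dd (fst p) * dcc (fst p) (snd p))"])
  show "integrable (M \<Otimes>\<^sub>M M) (\<lambda>p. LL * (dd (fst p) * dcc (fst p) (snd p)))" using G_int by simp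
  show "(\<lambda>(z, x). dd z * dcc z x * hh x) \<in> borel_measurable (M \<Otimes>\<^sub>M M)"
    using dcc_m by (simp add: case_prod_beta') measurable
  show "AE p in M \<Otimes>\<^sub>M M. norm ((\<lambda>(z, x). dd z * dcc z x * hh x) p) \<le> norm (LL * (dd (fst p) * dcc (fst p) (snd p)))"
  proof (intro AE_I2)
    fix p
    have "\<bar>dd (fst p) * dcc (fst p) (snd p) * hh (snd p)\<bar> = (dd (fst p) * dcc (fst p) (snd p)) * \<bar>hh (snd p)\<bar>"
      using dd_pos dcc_pos by (simp add: abs_mult)
    also have "\<dots> \<le> (dd (fst p) * dcc (fst p) (snd p)) * LL"
      using hh_bound dd_pos dcc_pos by (intro mult_left_mono) (auto intro!: less_imp_le)
    finally show "norm ((\<lambda>(z, x). dd z * dcc z x * hh x) p) \<le> norm (LL * (dd (fst p) * dcc (fst p) (snd p)))"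
      using LL_nonneg dd_pos dcc_pos by (simp add: case_prod_beta' abs_mult mult.commute mult.left_commute)
  qed
qed

lemma dtt_eq: assumes x: "x \<in> space M" shows "(\<integral>z. dd z * dcc z x \<partial>M) = dtt x"
proof -
  note x[measurable]
  have "(\<integral>\<^sup>+ z. ennreal (dd z * dcc z x) \<partial>M) = tvis x"
    by (simp add: tilde_visit_def ennreal_mult dd_e dcc_e less_imp_le[OF dd_pos] less_imp_le[OF dcc_pos])
  also have "\<dots> = ennreal (dtt x)" by (simp add: dtt_e)
  finally show ?thesis
    by (subst (asm) nn_integral_eq_integrable) (auto intro!: less_imp_le dd_pos dcc_pos dtt_pos)
qed

lemma fubini_step: "(\<integral>z. dd z * (\<integral>x. dcc z x * hh x \<partial>M) \<partial>M) = (\<integral>x. dtt x * hh x \<partial>M)"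
  and fub_int: "integrable M (\<lambda>z. dd z * (\<integral>x. dcc z x * hh x \<partial>M))"
proof -
  have I: "integrable (M \<Otimes>\<^sub>M M) (case_prod (\<lambda>z x. dd z * dcc z x * hh x))" using F_int by simp
  have "(\<integral>x. (\<integral>z. dd z * dcc z x * hh x \<partial>M) \<partial>M) = (\<integral>z. (\<integral>x. dd z * dcc z x * hh x \<partial>M) \<partial>M)"
    by (rule pair_sigma_finite.Fubini_integral[OF pMM I])
  moreover have "(\<integral>x. (\<integral>z. dd z * dcc z x * hh x \<partial>M) \<partial>M) = (\<integral>x. dtt x * hh x \<partial>M)"
  proof (rule Bochner_Integration.integral_cong[OF refl])
    fix x assume "x \<in> space M"
    then show "(\<integral>z. dd z * dcc z x * hh x \<partial>M) = dtt x * hh x"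
      using integral_mult_left_zero[where f="\<lambda>z. dd z * dcc z x" and c="hh x" and M=M] by (simp add: dtt_eq)
  qed
  moreover have "(\<lambda>z. \<integral>x. dd z * dcc z x * hh x \<partial>M) = (\<lambda>z. dd z * (\<integral>x. dcc z x * hh x \<partial>M))"
    by (simp add: mult.assoc)
  ultimately show "(\<integral>z. dd z * (\<integral>x. dcc z x * hh x \<partial>M) \<partial>M) = (\<integral>x. dtt x * hh x \<partial>M)" by simp
  have "integrable M (\<lambda>z. \<integral>x. dd z * dcc z x * hh x \<partial>M)"
    by (rule pair_sigma_finite.integrable_fst[OF pMM I])
  then show "integrable M (\<lambda>z. dd z * (\<integral>x. dcc z x * hh x \<partial>M))" by (simp add: mult.assoc)
qed

lemma KL_ge: assumes z: "z \<in> space M"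
  shows "ennreal (\<integral>x. dcc z x * hh x \<partial>M) \<le> e2ennreal (KL_dens M (dcc z) qs)"
proof (cases "integrable M (\<lambda>x. dcc z x * ln (dcc z x / qs x))")
  case False
  then show ?thesis by (simp add: KL_dens_def)
next
  case True
  note z[measurable]
  have i1: "integrable M (\<lambda>x. dcc z x * hh x)"
    by (rule bound_int[OF dcc_int(1)[OF z]]) (auto intro: less_imp_le dcc_pos)
  have "(\<integral>x. dcc z x * hh x \<partial>M) = (\<integral>x. dcc z x * hh x + dcc z x - dd x \<partial>M)"
    using i1 dcc_int[OF z] dd_int by simp
  also have "\<dots> \<le> (\<integral>x. dcc z x * ln (dcc z x / qs x) \<partial>M)"
  proof (rule integral_mono)
    show "integrable M (\<lambda>x. dcc z x * hh x + dcc z x - dd x)" using i1 dcc_int[OF z] dd_int by simp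
    show "integrable M (\<lambda>x. dcc z x * ln (dcc z x / qs x))" by fact
    fix x
    have f: "0 < dcc z x" and a: "0 < dd x" and q: "0 < qs x" using dcc_pos dd_pos qs_pos[rule_format, of x] by simp_all
    have "dcc z x - dd x \<le> dcc z x * ln (dcc z x / dd x)" by (rule xlog_ge[OF f a])
    moreover have "ln (dcc z x / qs x) = ln (dcc z x / dd x) + ln (dd x / qs x)"
      using f a q by (simp add: ln_div)
    ultimately show "dcc z x * hh x + dcc z x - dd x \<le> dcc z x * ln (dcc z x / qs x)"
      by (simp add: distrib_left)
  qed
  finally show ?thesis using True by (simp add: KL_dens_def ennreal_leI)
qed

lemma stepD: "(\<integral>x. dd x * hh x \<partial>M) - LL * (\<integral>x. \<bar>dd x - dtt x\<bar> \<partial>M) \<le> (\<integral>x. dtt x * hh x \<partial>M)"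
proof -
  have i1: "integrable M (\<lambda>x. dd x * hh x)"
    by (rule bound_int[OF dd_int(1)]) (auto intro: less_imp_le dd_pos)
  have i2: "integrable M (\<lambda>x. dtt x * hh x)"
    by (rule bound_int[OF dtt_int(1)]) (auto intro: less_imp_le dtt_pos)
  have i3: "integrable M (\<lambda>x. \<bar>dd x - dtt x\<bar>)" using dd_int dtt_int by simp
  have "(\<integral>x. dd x * hh x - dtt x * hh x \<partial>M) \<le> (\<integral>x. LL * \<bar>dd x - dtt x\<bar> \<partial>M)"
  proof (rule integral_mono)
    show "integrable M (\<lambda>x. dd x * hh x - dtt x * hh x)" using i1 i2 by simp
    show "integrable M (\<lambda>x. LL * \<bar>dd x - dtt x\<bar>)" using i3 by simp
    fix x
    have "dd x * hh x - dtt x * hh x = (dd x - dtt x) * hh x" by (simp add: algebra_simps)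
    also have "\<dots> \<le> \<bar>dd x - dtt x\<bar> * \<bar>hh x\<bar>" by (metis abs_ge_self abs_mult)
    also have "\<dots> \<le> \<bar>dd x - dtt x\<bar> * LL" by (intro mult_left_mono hh_bound) simp
    finally show "dd x * hh x - dtt x * hh x \<le> LL * \<bar>dd x - dtt x\<bar>" by (simp add: mult.commute)
  qed
  then show ?thesis using i1 i2 i3 by simp
qed

lemma main: "- enn2ereal (\<integral>\<^sup>+ z. ennreal (dd z) * e2ennreal (KL_dens M (dcc z) qs) \<partial>M)
   \<le> - KL_dens M dd qs + ereal LL * (if KL_dens M dd dtt = \<infinity> then \<infinity> else ereal (sqrt (2 * real_of_ereal (KL_dens M dd dtt))))"
proof -
  define E where "E = (\<integral>\<^sup>+ z. ennreal (dd z) * e2ennreal (KL_dens M (dcc z) qs) \<partial>M)"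
  define I where "I z = (\<integral>x. dcc z x * hh x \<partial>M)" for z
  define K where "K = (\<integral>x. dd x * hh x \<partial>M)"
  define T where "T = (\<integral>x. \<bar>dd x - dtt x\<bar> \<partial>M)"
  have "(\<integral>\<^sup>+ z. ennreal (dd z * I z) \<partial>M) \<le> E"
    unfolding E_def
  proof (rule nn_integral_mono)
    fix z assume z: "z \<in> space M"
    have "ennreal (dd z * I z) = ennreal (dd z) * ennreal (I z)"
      using dd_pos by (intro ennreal_mult') (simp add: less_imp_le)
    also have "\<dots> \<le> ennreal (dd z) * e2ennreal (KL_dens M (dcc z) qs)"
      unfolding I_def by (intro mult_left_mono KL_ge[OF z]) simp
    finally show "ennreal (dd z * I z) \<le> ennreal (dd z) * e2ennreal (KL_dens M (dcc z) qs)" .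
  qed
  then have E1: "enn2ereal (\<integral>\<^sup>+ z. ennreal (dd z * I z) \<partial>M) \<le> enn2ereal E"
    by (simp add: less_eq_ennreal.rep_eq[symmetric])
  have E2: "ereal (\<integral>z. dd z * I z \<partial>M) \<le> enn2ereal (\<integral>\<^sup>+ z. ennreal (dd z * I z) \<partial>M)"
    unfolding I_def by (rule integral_le_nn[OF fub_int])
  have E3: "(\<integral>z. dd z * I z \<partial>M) = (\<integral>x. dtt x * hh x \<partial>M)" unfolding I_def by (rule fubini_step)
  have E4: "K - LL * T \<le> (\<integral>x. dtt x * hh x \<partial>M)" unfolding K_def T_def by (rule stepD)
  have "ereal (K - LL * T) \<le> ereal (\<integral>z. dd z * I z \<partial>M)" using E3 E4 by simp
  also note E2
  also note E1
  finally have X: "ereal (K - LL * T) \<le> enn2ereal E" .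
  then have "- enn2ereal E \<le> - ereal (K - LL * T)" by (simp only: ereal_minus_le_minus)
  then have H: "- enn2ereal E \<le> ereal (LL * T - K)" by simp
  have KLq: "KL_dens M dd qs = ereal K"
  proof -
    have "integrable M (\<lambda>x. dd x * hh x)"
      by (rule bound_int[OF dd_int(1)]) (auto intro: less_imp_le dd_pos)
    then show ?thesis by (simp add: KL_dens_def K_def)
  qed
  note H' = H[unfolded E_def]
  show ?thesis
  proof (cases "integrable M (\<lambda>x. dd x * ln (dd x / dtt x))")
    case True
    define \<kappa> where "\<kappa> = (\<integral>x. dd x * ln (dd x / dtt x) \<partial>M)"
    have KLt: "KL_dens M dd dtt = ereal \<kappa>" using True by (simp add: KL_dens_def \<kappa>_def)
    have "T \<le> sqrt (2 * \<kappa>)" unfolding T_def \<kappa>_def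
      by (rule pinsker) (use dd_int dtt_int True dd_pos dtt_pos in auto)
    then have "LL * T \<le> LL * sqrt (2 * \<kappa>)" using LL_nonneg by (rule mult_left_mono)
    then have Y: "ereal (LL * T - K) \<le> ereal (- K + LL * sqrt (2 * \<kappa>))" by simp
    have Z: "- ereal K + ereal LL * (if ereal \<kappa> = \<infinity> then \<infinity> else ereal (sqrt (2 * real_of_ereal (ereal \<kappa>))))
       = ereal (- K + LL * sqrt (2 * \<kappa>))" by simp
    show ?thesis unfolding KLq KLt Z using order_trans[OF H' Y] .
  next
    case False
    then have KLt: "KL_dens M dd dtt = \<infinity>" by (simp add: KL_dens_def)
    show ?thesis
    proof (cases "LL = 0")
      case True
      have Z: "- ereal K + ereal LL * (if (\<infinity>::ereal) = \<infinity> then \<infinity> else ereal (sqrt (2 * real_of_ereal (\<infinity>::ereal))))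
         = ereal (LL * T - K)" using True by simp
      show ?thesis unfolding KLq KLt Z by (rule H')
    next
      case False
      then have "0 < LL" using LL_nonneg by simp
      then have Z: "- ereal K + ereal LL * (if (\<infinity>::ereal) = \<infinity> then \<infinity> else ereal (sqrt (2 * real_of_ereal (\<infinity>::ereal))))
         = \<infinity>" by simp
      show ?thesis unfolding KLq KLt Z by simp
    qed
  qed
qed

end

theorem theorem1:
  fixes Ms :: "'s measure" and Ma :: "'a measure"
    and p0 :: "'s \<Rightarrow> real" and P :: "'s \<Rightarrow> 'a \<Rightarrow> 's \<Rightarrow> real" and pol :: "'s \<Rightarrow> 'a \<Rightarrow> real"
    and \<gamma> :: real and qs :: "'s \<times> 'a \<Rightarrow> real"
  assumes sfS: "sigma_finite_measure Ms" and sfA: "sigma_finite_measure Ma"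
    and p0_meas: "p0 \<in> borel_measurable Ms"
    and p0_nonneg: "\<forall>s. 0 \<le> p0 s"
    and p0_int: "(\<integral>\<^sup>+ s. ennreal (p0 s) \<partial>Ms) = 1"
    and P_meas: "(\<lambda>x. P (fst x) (fst (snd x)) (snd (snd x))) \<in> borel_measurable (Ms \<Otimes>\<^sub>M (Ma \<Otimes>\<^sub>M Ms))"
    and P_nonneg: "\<forall>s a s'. 0 \<le> P s a s'"
    and P_int: "\<forall>s a. (\<integral>\<^sup>+ s'. ennreal (P s a s') \<partial>Ms) = 1"
    and pol_meas: "(\<lambda>x. pol (fst x) (snd x)) \<in> borel_measurable (Ms \<Otimes>\<^sub>M Ma)"
    and pol_nonneg: "\<forall>s a. 0 \<le> pol s a"
    and pol_int: "\<forall>s. (\<integral>\<^sup>+ a. ennreal (pol s a) \<partial>Ma) = 1"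
    and gamma: "0 \<le> \<gamma>" "\<gamma> < 1"
    and qs_meas: "qs \<in> borel_measurable (Ms \<Otimes>\<^sub>M Ma)"
    and qs_pos: "\<forall>x. 0 < qs x"
    and qs_int: "(\<integral>\<^sup>+ x. ennreal (qs x) \<partial>(Ms \<Otimes>\<^sub>M Ma)) = 1"
    and d_pos: "\<forall>x. 0 < visit Ms Ma p0 P pol \<gamma> x \<and> visit Ms Ma p0 P pol \<gamma> x < \<infinity>"
    and dc_pos: "\<forall>z x. 0 < cond_visit Ms Ma P pol \<gamma> z x \<and> cond_visit Ms Ma P pol \<gamma> z x < \<infinity>"
    and dt_pos: "\<forall>x. 0 < tilde_visit Ms Ma p0 P pol \<gamma> x \<and> tilde_visit Ms Ma p0 P pol \<gamma> x < \<infinity>"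
    and L_fin: "bdd_above (range (\<lambda>x. \<bar>ln (enn2real (visit Ms Ma p0 P pol \<gamma> x) / qs x)\<bar>))"
  shows
    "(let M = Ms \<Otimes>\<^sub>M Ma;
          d = (\<lambda>x. enn2real (visit Ms Ma p0 P pol \<gamma> x));
          dc = (\<lambda>z x. enn2real (cond_visit Ms Ma P pol \<gamma> z x));
          dt = (\<lambda>x. enn2real (tilde_visit Ms Ma p0 P pol \<gamma> x));
          L = (SUP x. \<bar>ln (d x / qs x)\<bar>);
          KLdt = KL_dens M d dt
      in - enn2ereal (\<integral>\<^sup>+ z. ennreal (d z) * e2ennreal (KL_dens M (dc z) qs) \<partial>M)
         \<le> - KL_dens M d qs
           + ereal L * (if KLdt = \<infinity> then \<infinity> else ereal (sqrt (2 * real_of_ereal KLdt))))"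
  proof -
  interpret mdp2 Ms Ma p0 P pol \<gamma> qs
    using assms by (simp add: mdp_def mdp2_def mdp2_axioms_def)
  show ?thesis using main by (simp only: Let_def)
qed

end
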